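(* Let $d\ge2$. Let $\Omega\subset\mathbb{R}^d_+$ be open and bounded and satisfy the cone condition: for every $x\in\partial\Omega$ there exist a cone $\mathcal{K}_x$ with nonempty interior and a neighborhood $V_x$ of $x$ such that $y\in V_x\setminus\Omega$ implies $(y+\mathcal{K}_x)\cap\overline{\Omega}\cap V_x\subset\{y\}$. Let $f:\mathbb{R}^d_+\to[0,\infty)$ satisfy: there is a continuous nondecreasing $m:[0,\infty)\to[0,\infty)$ with $m(0)=0$ and $|f(x)-f(y)|\le m(|x-y|)$ for $x,y\in\Omega$, and $f(x)=0$ for $x\notin\Omega$. Let $u,v:\overline{\mathbb{R}^d_+}\to\mathbb{R}$ be continuous, with $u$ a viscosity subsolution and $v$ a viscosity supersolution of \[u_{x_1}\cdots u_{x_d}=f\quad\text{on }\mathbb{R}^d_+,\] and assume $u$ is truncatable and $v$ is Pareto-monotone. If $u\le v$ on $\partial\mathbb{R}^d_+$, then $u\le v$ on $\mathbb{R}^d_+$.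
   Context: $\mathbb{R}^d_+=\{x:x_i>0\ \forall i\}$; $x\leqq y$ means $x_i\le y_i$ for all $i$. $v$ is Pareto-monotone if $x\leqq y$ implies $v(x)\le v(y)$. For bounded $g$, $g^*(x)=\limsup_{r\searrow0}\sup\{g(y):|y-x|\le r\}$ and $g_*=-(-g)^*$. Superdifferential $D^+u(x)$: all $p$ with $u(y)\le u(x)+\langle p,y-x\rangle+o(|y-x|)$ as $y\to x$; subdifferential $D^-u(x)$ with $\ge$. A continuous $u$ is a viscosity subsolution of $u_{x_1}\cdots u_{x_d}=g$ on $\mathbb{R}^d_+$ if $p_1\cdots p_d\le g^*(x)$ for all $x\in\mathbb{R}^d_+$, $p\in D^+u(x)$; a supersolution if $p_1\cdots p_d\ge g_*(x)$ for all $p\in D^-u(x)$. A viscosity subsolution $u$ of $u_{x_1}\cdots u_{x_d}=f$ is truncatable if for every $z\in\mathbb{R}^d_+$, the function $\tilde u(x)=u(\min(x_1,z_1),\dots,\min(x_d,z_d))$ is a viscosity subsolution of $\tilde u_{x_1}\cdots\tilde u_{x_d}=\hat f$ on $\mathbb{R}^d_+$, where $\hat f(x)=f^*(x)$ if $x\leqq z$ and $\hat f(x)=0$ otherwise. *)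

theory Defs
  imports "HOL-Analysis.Analysis"
begin

definition pos_orthant :: "(real ^ 'n) set" where
  "pos_orthant = {x. \<forall>i. 0 < x $ i}"

definition cl_orthant :: "(real ^ 'n) set" where
  "cl_orthant = {x. \<forall>i. 0 \<le> x $ i}"

definition vle :: "real ^ 'n \<Rightarrow> real ^ 'n \<Rightarrow> bool" where
  "vle x y \<longleftrightarrow> (\<forall>i. x $ i \<le> y $ i)"

definition pareto_monotone :: "(real ^ 'n) set \<Rightarrow> (real ^ 'n \<Rightarrow> real) \<Rightarrow> bool" where
  "pareto_monotone S v \<longleftrightarrow> (\<forall>x\<in>S. \<forall>y\<in>S. vle x y \<longrightarrow> v x \<le> v y)"

text \<open>Upper envelope g^*(x) = limsup_{r \<searrow> 0} sup {g y : |y - x| \<le> r}, where g is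
  defined on the domain S (values in extended reals to avoid unboundedness issues).\<close>
definition usc_env :: "(real ^ 'n) set \<Rightarrow> (real ^ 'n \<Rightarrow> real) \<Rightarrow> real ^ 'n \<Rightarrow> ereal" where
  "usc_env S g x = Limsup (at_right (0::real)) (\<lambda>r. SUP y\<in>cball x r \<inter> S. ereal (g y))"

definition lsc_env :: "(real ^ 'n) set \<Rightarrow> (real ^ 'n \<Rightarrow> real) \<Rightarrow> real ^ 'n \<Rightarrow> ereal" where
  "lsc_env S g x = - usc_env S (\<lambda>y. - g y) x"

definition superdiff :: "(real ^ 'n \<Rightarrow> real) \<Rightarrow> real ^ 'n \<Rightarrow> (real ^ 'n) set" where
  "superdiff u x = {p. \<forall>e>0. \<forall>\<^sub>F y in at x. u y \<le> u x + p \<bullet> (y - x) + e * norm (y - x)}"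

definition subdiff :: "(real ^ 'n \<Rightarrow> real) \<Rightarrow> real ^ 'n \<Rightarrow> (real ^ 'n) set" where
  "subdiff u x = {p. \<forall>e>0. \<forall>\<^sub>F y in at x. u y \<ge> u x + p \<bullet> (y - x) - e * norm (y - x)}"

text \<open>Viscosity sub/supersolution of u_{x_1} ... u_{x_d} = g on R^d_+
  (continuity of u is assumed separately).\<close>
definition visc_sub :: "(real ^ 'n \<Rightarrow> real) \<Rightarrow> (real ^ 'n \<Rightarrow> real) \<Rightarrow> bool" where
  "visc_sub u g \<longleftrightarrow> (\<forall>x\<in>pos_orthant. \<forall>p\<in>superdiff u x.
      ereal (\<Prod>i\<in>UNIV. p $ i) \<le> usc_env pos_orthant g x)"

definition visc_super :: "(real ^ 'n \<Rightarrow> real) \<Rightarrow> (real ^ 'n \<Rightarrow> real) \<Rightarrow> bool" where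
  "visc_super u g \<longleftrightarrow> (\<forall>x\<in>pos_orthant. \<forall>p\<in>subdiff u x.
      ereal (\<Prod>i\<in>UNIV. p $ i) \<ge> lsc_env pos_orthant g x)"

definition trunc :: "(real ^ 'n \<Rightarrow> real) \<Rightarrow> real ^ 'n \<Rightarrow> real ^ 'n \<Rightarrow> real" where
  "trunc u z x = u (\<chi> i. min (x $ i) (z $ i))"

definition hat_rhs :: "(real ^ 'n \<Rightarrow> real) \<Rightarrow> real ^ 'n \<Rightarrow> real ^ 'n \<Rightarrow> real" where
  "hat_rhs f z x = (if vle x z then real_of_ereal (usc_env pos_orthant f x) else 0)"

definition truncatable :: "(real ^ 'n \<Rightarrow> real) \<Rightarrow> (real ^ 'n \<Rightarrow> real) \<Rightarrow> bool" where
  "truncatable u f \<longleftrightarrow> visc_sub u f \<and>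
     (\<forall>z\<in>pos_orthant. visc_sub (trunc u z) (hat_rhs f z))"

definition cone_condition :: "(real ^ 'n) set \<Rightarrow> bool" where
  "cone_condition \<Omega> \<longleftrightarrow> (\<forall>x\<in>frontier \<Omega>. \<exists>K V. cone K \<and> interior K \<noteq> {} \<and>
      open V \<and> x \<in> V \<and>
      (\<forall>y\<in>V - \<Omega>. ((\<lambda>k. y + k) ` K) \<inter> closure \<Omega> \<inter> V \<subseteq> {y}))"

end

theory Submission
  imports Defs
begin



lemma superdiff_quad:
  fixes w :: "real ^ 'n \<Rightarrow> real"
  assumes r: "r > 0" and c: "c \<ge> 0"
    and bd: "\<And>y. y \<in> ball x r \<Longrightarrow> w y \<le> w x + p \<bullet> (y - x) + c * (norm (y - x))^2"
  shows "p \<in> superdiff w x"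
  unfolding superdiff_def
proof (intro CollectI allI impI)
  fix e :: real assume e: "e > 0"
  define d where "d = min r (e / (c + 1))"
  have d: "d > 0" using r e c by (auto simp: d_def)
  have "\<forall>\<^sub>F y in at x. y \<in> ball x d"
    using d by (auto simp: eventually_at dist_commute intro!: exI[of _ d])
  then show "\<forall>\<^sub>F y in at x. w y \<le> w x + p \<bullet> (y - x) + e * norm (y - x)"
  proof eventually_elim
    case (elim y)
    then have n: "norm (y - x) < d" by (simp add: dist_norm norm_minus_commute)
    have "c * (norm (y - x))^2 = (c * norm (y - x)) * norm (y - x)" by (simp add: power2_eq_square)
    also have "\<dots> \<le> e * norm (y - x)"
    proof (intro mult_right_mono)
      have "c * norm (y - x) \<le> (c + 1) * norm (y - x)" by (simp add: algebra_simps)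
      also have "\<dots> \<le> (c + 1) * (e / (c + 1))"
        using n c d_def by (intro mult_left_mono) auto
      also have "\<dots> = e" using c by simp
      finally show "c * norm (y - x) \<le> e" .
    qed simp
    finally show ?case using bd[of y] elim d_def by (auto simp: dist_norm norm_minus_commute)
  qed
qed

lemma subdiff_quad:
  fixes w :: "real ^ 'n \<Rightarrow> real"
  assumes r: "r > 0" and c: "c \<ge> 0"
    and bd: "\<And>y. y \<in> ball x r \<Longrightarrow> w y \<ge> w x + p \<bullet> (y - x) - c * (norm (y - x))^2"
  shows "p \<in> subdiff w x"
proof -
  have "- p \<in> superdiff (\<lambda>y. - w y) x"
    by (rule superdiff_quad[OF r c]) (use bd in force)
  then show ?thesis unfolding superdiff_def subdiff_def
    by (auto simp: algebra_simps)
qed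

lemma subdiff_mono_nonneg:
  fixes v :: "real ^ 'n \<Rightarrow> real"
  assumes mono: "pareto_monotone cl_orthant v" and y: "y \<in> pos_orthant"
    and p: "p \<in> subdiff v y"
  shows "p $ i \<ge> 0"
proof (rule ccontr)
  assume neg: "\<not> p $ i \<ge> 0"
  define e where "e = - p $ i / 2"
  have e: "e > 0" using neg e_def by auto
  from p e have "\<forall>\<^sub>F y' in at y. v y' \<ge> v y + p \<bullet> (y' - y) - e * norm (y' - y)"
    unfolding subdiff_def by auto
  then obtain d where d: "d > 0" and
    H: "\<And>y'. y' \<noteq> y \<Longrightarrow> dist y' y < d \<Longrightarrow> v y' \<ge> v y + p \<bullet> (y' - y) - e * norm (y' - y)"
    unfolding eventually_at by blast
  have yi: "y $ i > 0" using y by (auto simp: pos_orthant_def)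
  define t where "t = min (d / 2) (y $ i / 2)"
  have t: "t > 0" "t < d" "t \<le> y $ i" using d yi by (auto simp: t_def)
  define y' where "y' = y - t *\<^sub>R axis i 1"
  have ny: "norm (y' - y) = t" using t by (simp add: y'_def)
  have "y' \<noteq> y" using ny t by auto
  then have "v y' \<ge> v y + p \<bullet> (y' - y) - e * norm (y' - y)"
    using H[of y'] ny t by (simp add: dist_norm)
  moreover have "p \<bullet> (y' - y) = - t * p $ i"
    by (simp add: y'_def inner_axis)
  moreover have "v y' \<le> v y"
  proof -
    have "y' \<in> cl_orthant" using t y unfolding y'_def cl_orthant_def pos_orthant_def
      by (auto simp: axis_def less_imp_le)
    moreover have "y \<in> cl_orthant" using y by (auto simp: cl_orthant_def pos_orthant_def less_imp_le)
    moreover have "vle y' y" using t by (auto simp: vle_def y'_def axis_def)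
    ultimately show ?thesis using mono by (auto simp: pareto_monotone_def)
  qed
  moreover have "e * norm (y' - y) = e * t" using ny by simp
  ultimately have "- t * p $ i - e * t \<le> 0" by linarith
  moreover have "- t * p $ i - e * t = t * e" by (simp add: e_def algebra_simps)
  ultimately show False using t e by (simp add: mult_pos_pos) 
qed

lemma prod_shift:
  fixes q :: "'i \<Rightarrow> real"
  assumes "finite A" "A \<noteq> {}" "\<And>i. i \<in> A \<Longrightarrow> q i \<ge> 0" "e \<ge> 0"
  shows "(\<Prod>i\<in>A. q i + e) \<ge> (\<Prod>i\<in>A. q i) + e ^ card A"
  using assms
proof (induction A rule: finite_ne_induct)
  case singleton then show ?case by simp
next
  case (insert a A)
  have pA: "(\<Prod>i\<in>A. q i) \<ge> 0" using insert by (auto intro: prod_nonneg)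
  have IH: "(\<Prod>i\<in>A. q i + e) \<ge> (\<Prod>i\<in>A. q i) + e ^ card A" using insert by auto
  have qa: "q a \<ge> 0" using insert by auto
  have "(\<Prod>i\<in>insert a A. q i + e) = (q a + e) * (\<Prod>i\<in>A. q i + e)" using insert by simp
  also have "\<dots> \<ge> (q a + e) * ((\<Prod>i\<in>A. q i) + e ^ card A)"
    using IH qa insert.prems by (intro mult_left_mono) auto
  moreover have "(q a + e) * ((\<Prod>i\<in>A. q i) + e ^ card A) \<ge> q a * (\<Prod>i\<in>A. q i) + e * e ^ card A"
    using qa pA \<open>e \<ge> 0\<close> by (simp add: algebra_simps add_nonneg_nonneg mult_nonneg_nonneg)
  ultimately show ?case using insert by simp
qed

lemma prod_ratio:
  fixes p q :: "'i \<Rightarrow> real"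
  assumes "finite A" "\<And>i. i \<in> A \<Longrightarrow> c * q i \<le> p i" "\<And>i. i \<in> A \<Longrightarrow> 0 \<le> q i" "c \<ge> 0"
  shows "c ^ card A * (\<Prod>i\<in>A. q i) \<le> (\<Prod>i\<in>A. p i)"
proof -
  have "c ^ card A * (\<Prod>i\<in>A. q i) = (\<Prod>i\<in>A. c * q i)"
    by (simp add: prod.distrib)
  also have "\<dots> \<le> (\<Prod>i\<in>A. p i)"
    using assms by (intro prod_mono) auto
  finally show ?thesis .
qed

lemma norm_sq_add: "(norm (a + b :: 'a::real_inner))^2 = (norm a)^2 + 2 * (a \<bullet> b) + (norm b)^2"
  by (simp add: power2_norm_eq_inner inner_add_left inner_add_right inner_commute)



lemma nonzero_in_open:
  fixes U :: "(real ^ 'n) set"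
  assumes "open U" "U \<noteq> {}"
  obtains \<eta> where "\<eta> \<in> U" "\<eta> \<noteq> 0"
proof -
  obtain k where k: "k \<in> U" using assms by blast
  then obtain r where r: "r > 0" "ball k r \<subseteq> U" using assms open_contains_ball by blast
  show ?thesis
  proof (cases "k = 0")
    case True
    define a where "a = (r/2) *\<^sub>R (axis undefined (1::real) :: real ^ 'n)"
    have "norm a = r/2" using r by (simp add: a_def)
    then have "a \<in> U" using r True by (auto simp: dist_norm intro!: subsetD[OF r(2)])
    moreover have "a \<noteq> 0" using \<open>norm a = r/2\<close> r by auto
    ultimately show ?thesis using that by blast
  qed (use k that in blast)
qed

lemma eta_choice:
  fixes \<Omega> :: "(real ^ 'n) set"
  assumes op: "open \<Omega>" and cone: "cone_condition \<Omega>"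
  shows "\<exists>\<eta>. \<forall>X Y. X \<longlonglongrightarrow> xh \<longrightarrow> Y \<longlonglongrightarrow> xh \<longrightarrow>
     (\<lambda>n. real n *\<^sub>R (X n - Y n) - \<eta>) \<longlonglongrightarrow> 0 \<longrightarrow>
     (\<forall>\<^sub>F n in sequentially. Y n \<in> \<Omega> \<or> X n \<notin> closure \<Omega>)"
proof (cases "xh \<in> \<Omega>")
  case True
  show ?thesis
  proof (intro exI allI impI)
    fix X Y :: "nat \<Rightarrow> real ^ 'n" assume "Y \<longlonglongrightarrow> xh"
    then have "\<forall>\<^sub>F n in sequentially. Y n \<in> \<Omega>" by (rule topological_tendstoD[OF _ op True])
    then show "\<forall>\<^sub>F n in sequentially. Y n \<in> \<Omega> \<or> X n \<notin> closure \<Omega>" by (rule eventually_mono) simp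
  qed
next
  case notin: False
  show ?thesis
  proof (cases "xh \<in> closure \<Omega>")
    case False
    show ?thesis
    proof (intro exI allI impI)
      fix X Y :: "nat \<Rightarrow> real ^ 'n" assume "X \<longlonglongrightarrow> xh"
      then have "\<forall>\<^sub>F n in sequentially. X n \<in> - closure \<Omega>" using False by (intro topological_tendstoD) auto
      then show "\<forall>\<^sub>F n in sequentially. Y n \<in> \<Omega> \<or> X n \<notin> closure \<Omega>" by (rule eventually_mono) simp
    qed
  next
    case True
    then have fr: "xh \<in> frontier \<Omega>" using notin op by (simp add: frontier_def interior_open)
    have "\<exists>K V. cone K \<and> interior K \<noteq> {} \<and> open V \<and> xh \<in> V \<and>
      (\<forall>y\<in>V - \<Omega>. ((\<lambda>k. y + k) ` K) \<inter> closure \<Omega> \<inter> V \<subseteq> {y})"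
      using cone fr unfolding cone_condition_def by (rule bspec)
    then obtain K V where KV: "cone K \<and> interior K \<noteq> {} \<and> open V \<and> xh \<in> V \<and>
      (\<forall>y\<in>V - \<Omega>. ((\<lambda>k. y + k) ` K) \<inter> closure \<Omega> \<inter> V \<subseteq> {y})" by (elim exE)
    then have K: "cone K" "interior K \<noteq> {}" and V: "open V" "xh \<in> V"
      and C: "\<forall>y\<in>V - \<Omega>. ((\<lambda>k. y + k) ` K) \<inter> closure \<Omega> \<inter> V \<subseteq> {y}" by simp_all
    obtain \<eta> where \<eta>: "\<eta> \<in> interior K" "\<eta> \<noteq> 0"
      using nonzero_in_open[of "interior K"] K by auto
    obtain \<rho>0 where \<rho>0: "\<rho>0 > 0" "ball \<eta> \<rho>0 \<subseteq> interior K"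
      using \<eta> open_contains_ball by blast
    define \<rho> where "\<rho> = min \<rho>0 (norm \<eta>)"
    have \<rho>: "\<rho> > 0" using \<rho>0 \<eta> by (auto simp: \<rho>_def)
    show ?thesis
    proof (intro exI[of _ \<eta>] allI impI)
      fix X Y :: "nat \<Rightarrow> real ^ 'n"
      assume X: "X \<longlonglongrightarrow> xh" and Y: "Y \<longlonglongrightarrow> xh" and A: "(\<lambda>n. real n *\<^sub>R (X n - Y n) - \<eta>) \<longlonglongrightarrow> 0"
      have e1: "\<forall>\<^sub>F n in sequentially. X n \<in> V" using X V by (rule topological_tendstoD)
      have e2: "\<forall>\<^sub>F n in sequentially. Y n \<in> V" using Y V by (rule topological_tendstoD)
      have e3: "\<forall>\<^sub>F n in sequentially. real n *\<^sub>R (X n - Y n) - \<eta> \<in> ball 0 \<rho>"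
        using A \<rho> by (intro topological_tendstoD) auto
      have e4: "\<forall>\<^sub>F n in sequentially. n \<ge> 1" by (rule eventually_ge_at_top)
      show "\<forall>\<^sub>F n in sequentially. Y n \<in> \<Omega> \<or> X n \<notin> closure \<Omega>"
        using e1 e2 e3 e4
      proof eventually_elim
        case (elim n)
        show ?case
        proof (cases "Y n \<in> \<Omega>")
          case Yn: False
          define k where "k = X n - Y n"
          have "real n *\<^sub>R k \<in> ball \<eta> \<rho>"
            using elim(3) by (simp add: k_def dist_norm norm_minus_commute)
          then have nk: "real n *\<^sub>R k \<in> K" using \<rho>0 \<rho>_def interior_subset by fastforce
          have "k = (1 / real n) *\<^sub>R (real n *\<^sub>R k)" using elim(4) by simp
          then have kK: "k \<in> K" using K(1) nk unfolding cone_def by (metis of_nat_0_le_iff zero_le_divide_1_iff)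
          have "k \<noteq> 0"
          proof
            assume "k = 0"
            then have "norm \<eta> < \<rho>" using elim(3) by (simp add: k_def)
            then show False by (simp add: \<rho>_def)
          qed
          then have "X n \<noteq> Y n" by (simp add: k_def)
          moreover have "X n \<in> (\<lambda>k. Y n + k) ` K" using kK by (auto simp: k_def image_iff intro!: bexI[of _ k])
          moreover have "Y n \<in> V - \<Omega>" using Yn elim(2) by blast
          ultimately have "X n \<notin> closure \<Omega>" using C elim(1) by blast
          then show ?thesis by simp
        qed simp
      qed
    qed
  qed
qed



lemma usc_le:
  fixes g :: "real ^ 'n \<Rightarrow> real" and B :: "real \<Rightarrow> real"
  assumes R: "R > 0"
    and bd: "\<And>r y. 0 < r \<Longrightarrow> r < R \<Longrightarrow> y \<in> cball x r \<inter> S \<Longrightarrow> g y \<le> B r"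
    and lim: "(B \<longlongrightarrow> c) (at_right 0)"
  shows "usc_env S g x \<le> ereal c"
proof -
  have ev: "\<forall>\<^sub>F r in at_right (0::real). (SUP y\<in>cball x r \<inter> S. ereal (g y)) \<le> ereal (B r)"
  proof -
    have "\<forall>\<^sub>F r in at_right (0::real). 0 < r \<and> r < R"
      using R by (simp add: eventually_at_right_field) (metis)
    then show ?thesis
      by eventually_elim (auto intro!: SUP_least bd)
  qed
  have "usc_env S g x \<le> Limsup (at_right 0) (\<lambda>r. ereal (B r))"
    unfolding usc_env_def by (rule Limsup_mono[OF ev])
  also have "\<dots> = ereal c"
    by (rule lim_imp_Limsup) (auto intro: lim)
  finally show ?thesis .
qed

lemma m_lim:
  fixes m :: "real \<Rightarrow> real"
  assumes "continuous_on {0..} m" "a \<ge> 0"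
  shows "((\<lambda>r. m (a + r)) \<longlongrightarrow> m a) (at_right 0)"
proof -
  have "((\<lambda>r. a + r) \<longlongrightarrow> a + 0) (at_right (0::real))"
    by (intro tendsto_intros)
  then have t: "((\<lambda>r. a + r) \<longlongrightarrow> a) (at_right (0::real))" by simp
  have "\<forall>\<^sub>F r in at_right (0::real). a + r \<in> {0..}"
    using assms(2) by (simp add: eventually_at_right_field) (metis add_nonneg_pos zero_less_one)
  from continuous_on_tendsto_compose[OF assms(1) t _ this] assms(2) show ?thesis by simp
qed

lemma real_of_ereal_le: "e \<le> ereal c \<Longrightarrow> 0 \<le> c \<Longrightarrow> real_of_ereal e \<le> c"
  by (cases e) auto

locale fsetup =
  fixes \<Omega> :: "(real ^ 'n) set" and f :: "real ^ 'n \<Rightarrow> real" and m :: "real \<Rightarrow> real"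
  assumes \<Omega>_sub: "\<Omega> \<subseteq> pos_orthant" and \<Omega>_open: "open \<Omega>"
    and f_nonneg: "\<forall>x\<in>pos_orthant. 0 \<le> f x"
    and m_cont: "continuous_on {0..} m" and m_mono: "mono_on {0..} m"
    and m_nonneg: "\<forall>t\<ge>0. 0 \<le> m t" and m0: "m 0 = 0"
    and f_mod: "\<forall>x\<in>\<Omega>. \<forall>y\<in>\<Omega>. \<bar>f x - f y\<bar> \<le> m (dist x y)"
    and f_out: "\<forall>x\<in>pos_orthant - \<Omega>. f x = 0"
begin

lemma key: "y \<in> \<Omega> \<Longrightarrow> w \<in> pos_orthant \<Longrightarrow> f w \<le> f y + m (dist w y)"
  using f_mod f_out f_nonneg m_nonneg \<Omega>_sub
  by (cases "w \<in> \<Omega>") (auto, smt (verit) zero_le_dist subsetD)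

lemma mle: "0 \<le> a \<Longrightarrow> a \<le> b \<Longrightarrow> m a \<le> m b"
  using m_mono by (auto simp: mono_on_def)

lemma fstar_le: assumes y: "y \<in> \<Omega>" shows "usc_env pos_orthant f w \<le> ereal (f y + m (dist w y))"
proof (rule usc_le[where R=1 and B="\<lambda>r. f y + m (dist w y + r)"])
  fix r w' assume r: "0 < r" "r < 1" and w': "w' \<in> cball w r \<inter> pos_orthant"
  have "dist w' y \<le> dist w y + r"
    using w' dist_triangle[of w' y w] by (auto simp: dist_commute)
  then have "m (dist w' y) \<le> m (dist w y + r)" by (intro mle) auto
  then show "f w' \<le> f y + m (dist w y + r)" using key[OF y] w' by force
next
  show "((\<lambda>r. f y + m (dist w y + r)) \<longlongrightarrow> f y + m (dist w y)) (at_right 0)"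
    by (intro tendsto_intros m_lim m_cont) simp
qed simp

lemma hat_le: assumes y: "y \<in> \<Omega>" shows "usc_env pos_orthant (hat_rhs f z) x \<le> ereal (f y + m (dist x y))"
proof (rule usc_le[where R=1 and B="\<lambda>r. f y + m (dist x y + r)"])
  fix r w' assume r: "0 < r" "r < 1" and w': "w' \<in> cball x r \<inter> pos_orthant"
  have "dist w' y \<le> dist x y + r"
    using w' dist_triangle[of w' y x] by (auto simp: dist_commute)
  then have mm: "m (dist w' y) \<le> m (dist x y + r)" by (intro mle) auto
  have fy: "0 \<le> f y" using y \<Omega>_sub f_nonneg by auto
  have "0 \<le> m (dist w' y)" using m_nonneg by auto
  then have "hat_rhs f z w' \<le> f y + m (dist w' y)"
    unfolding hat_rhs_def using real_of_ereal_le[OF fstar_le[OF y, of w']] fy by auto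
  then show "hat_rhs f z w' \<le> f y + m (dist x y + r)" using mm by linarith
next
  show "((\<lambda>r. f y + m (dist x y + r)) \<longlongrightarrow> f y + m (dist x y)) (at_right 0)"
    by (intro tendsto_intros m_lim m_cont) simp
qed simp

lemma hat_out: assumes x: "x \<notin> closure \<Omega>" shows "usc_env pos_orthant (hat_rhs f z) x \<le> 0"
proof -
  obtain r where r: "r > 0" "ball x r \<inter> \<Omega> = {}"
  proof -
    have "open (- closure \<Omega>)" by auto
    then obtain r where "r > 0" "ball x r \<subseteq> - closure \<Omega>" using x open_contains_ball by blast
    then show ?thesis using that closure_subset by blast
  qed
  have "usc_env pos_orthant (hat_rhs f z) x \<le> ereal 0"
  proof (rule usc_le[where R="r/2" and B="\<lambda>_. 0"])
    fix r' w' assume r': "0 < r'" "r' < r/2" and w': "w' \<in> cball x r' \<inter> pos_orthant"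
    have "usc_env pos_orthant f w' \<le> ereal 0"
    proof (rule usc_le[where R="r/2" and B="\<lambda>_. 0"])
      fix s w'' assume s: "0 < s" "s < r/2" and w'': "w'' \<in> cball w' s \<inter> pos_orthant"
      have "dist x w'' < r" using w' w'' s r' dist_triangle[of x w'' w'] by auto
      then have "w'' \<notin> \<Omega>" using r by auto
      then show "f w'' \<le> 0" using f_out w'' by auto
    qed (use r in auto)
    then show "hat_rhs f z w' \<le> 0"
      unfolding hat_rhs_def using real_of_ereal_le[of _ 0] by auto
  qed (use r in auto)
  then show ?thesis by (simp add: zero_ereal_def)
qed

lemma lsc_ge: assumes y: "y \<in> \<Omega>" shows "ereal (f y) \<le> lsc_env pos_orthant f y"
proof -
  obtain r where r: "r > 0" "ball y r \<subseteq> \<Omega>" using \<Omega>_open y open_contains_ball by blast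
  have "usc_env pos_orthant (\<lambda>w. - f w) y \<le> ereal (- f y + 0)"
  proof (rule usc_le[where R="r" and B="\<lambda>s. - f y + m (0 + s)"])
    fix s w assume s: "0 < s" "s < r" and w: "w \<in> cball y s \<inter> pos_orthant"
    then have "w \<in> \<Omega>" using r by (auto simp: dist_commute)
    then have "f y - f w \<le> m (dist w y)" using f_mod y by force
    moreover have "m (dist w y) \<le> m (0 + s)" using w by (intro mle) (auto simp: dist_commute)
    ultimately show "- f w \<le> - f y + m (0 + s)" by linarith
  next
    show "((\<lambda>s. - f y + m (0 + s)) \<longlongrightarrow> - f y + 0) (at_right 0)"
      using m_lim[OF m_cont, of 0] m0 by (intro tendsto_intros) auto
  qed (use r in auto)
  then show ?thesis unfolding lsc_env_def
    by (metis add.right_neutral ereal_minus_le_minus ereal_uminus_uminus uminus_ereal.simps(1))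
qed

end




lemma norm_sq_diff: "(norm (a - b :: 'a::real_inner))^2 = (norm a)^2 - 2 * (a \<bullet> b) + (norm b)^2"
  by (simp add: power2_norm_eq_inner inner_diff_left inner_diff_right inner_commute)

context fsetup begin

lemma f_bound: assumes "bounded \<Omega>" shows "\<exists>F\<ge>0. \<forall>y\<in>\<Omega>. f y \<le> F"
proof (cases "\<Omega> = {}")
  case True then show ?thesis by auto
next
  case False
  then obtain a where a: "a \<in> \<Omega>" by blast
  obtain e where e: "\<forall>y\<in>\<Omega>. dist a y \<le> e" using assms bounded_any_center by blast
  have fa: "0 \<le> f a" using a \<Omega>_sub f_nonneg by auto
  show ?thesis
  proof (intro exI[of _ "f a + m (max e 0)"] conjI ballI)
    show "0 \<le> f a + m (max e 0)" using fa m_nonneg by auto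
    fix y assume y: "y \<in> \<Omega>"
    have "f y \<le> f a + m (dist y a)" using key[OF a, of y] y \<Omega>_sub by auto
    also have "m (dist y a) \<le> m (max e 0)" using e y by (intro mle) (auto simp: dist_commute)
    finally show "f y \<le> f a + m (max e 0)" by simp
  qed
qed

lemma core:
  fixes w v :: "real ^ 'n \<Rightarrow> real" and xh :: "real ^ 'n"
  assumes bdd: "bounded \<Omega>" and cone: "cone_condition \<Omega>"
    and r0: "r0 > 0"
    and wc: "continuous_on (cball xh r0) w" and vc: "continuous_on (cball xh r0) v"
    and ep: "\<epsilon> > 0"
    and locmax: "\<And>x. x \<in> cball xh r0 \<Longrightarrow>
        w x - (v x + \<epsilon> * ((\<chi> i. 1) \<bullet> x)) \<le> w xh - (v xh + \<epsilon> * ((\<chi> i. 1) \<bullet> xh))"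
    and sub: "\<And>x p. x \<in> ball xh r0 \<Longrightarrow> p \<in> superdiff w x \<Longrightarrow>
        ereal (\<Prod>i\<in>UNIV. p $ i) \<le> usc_env pos_orthant (hat_rhs f z) x"
    and super: "\<And>y q. y \<in> ball xh r0 \<Longrightarrow> q \<in> subdiff v y \<Longrightarrow>
        lsc_env pos_orthant f y \<le> ereal (\<Prod>i\<in>UNIV. q $ i)"
    and qnn: "\<And>y q i. y \<in> ball xh r0 \<Longrightarrow> q \<in> subdiff v y \<Longrightarrow> 0 \<le> q $ i"
  shows False
proof -
  define D where "D = cball xh r0"
  define one :: "real ^ 'n" where "one = (\<chi> i. 1)"
  define V where "V y = v y + \<epsilon> * (one \<bullet> y)" for y
  define dd where "dd = CARD('n)"
  have dd1: "dd \<ge> 1" unfolding dd_def by (simp add: Suc_le_eq)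
  obtain \<eta> where eta: "\<And>X Y. X \<longlonglongrightarrow> xh \<Longrightarrow> Y \<longlonglongrightarrow> xh \<Longrightarrow>
     (\<lambda>n. real n *\<^sub>R (X n - Y n) - \<eta>) \<longlonglongrightarrow> 0 \<Longrightarrow>
     (\<forall>\<^sub>F n in sequentially. Y n \<in> \<Omega> \<or> X n \<notin> closure \<Omega>)"
    using eta_choice[OF \<Omega>_open cone, of xh] by blast
  define \<Phi> where "\<Phi> n x y = w x - V y - (norm (real n *\<^sub>R (x - y) - \<eta>))^2 - (norm (x - xh))^2" for n x y
  have Vc: "continuous_on D V" unfolding V_def D_def by (intro continuous_intros vc)
  have wc': "continuous_on D w" using wc by (simp add: D_def)
  have cD: "compact D" "D \<noteq> {}" using r0 by (auto simp: D_def)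
  have xhD: "xh \<in> D" using r0 by (simp add: D_def)
  have lm: "\<And>x. x \<in> D \<Longrightarrow> w x - V x \<le> w xh - V xh"
    using locmax by (simp add: D_def V_def one_def)
  have "\<forall>n. \<exists>pr. pr \<in> D \<times> D \<and> (\<forall>pr'\<in>D \<times> D. \<Phi> n (fst pr') (snd pr') \<le> \<Phi> n (fst pr) (snd pr))"
  proof
    fix n
    have "continuous_on (D \<times> D) (\<lambda>pr. \<Phi> n (fst pr) (snd pr))"
      unfolding \<Phi>_def
      by (intro continuous_intros continuous_on_compose2[OF wc'] continuous_on_compose2[OF Vc]) auto
    moreover have "D \<times> D \<noteq> {}" using cD(2) by simp
    ultimately show "\<exists>pr. pr \<in> D \<times> D \<and> (\<forall>pr'\<in>D \<times> D. \<Phi> n (fst pr') (snd pr') \<le> \<Phi> n (fst pr) (snd pr))"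
      using continuous_attains_sup[OF compact_Times[OF cD(1) cD(1)]] by blast
  qed
  then obtain P where P: "\<And>n. P n \<in> D \<times> D"
    "\<And>n pr'. pr' \<in> D \<times> D \<Longrightarrow> \<Phi> n (fst pr') (snd pr') \<le> \<Phi> n (fst (P n)) (snd (P n))"
    by (metis choice)
  define X where "X n = fst (P n)" for n
  define Y where "Y n = snd (P n)" for n
  have XD: "\<And>n. X n \<in> D" and YD: "\<And>n. Y n \<in> D" using P(1) by (auto simp: X_def Y_def mem_Times_iff)
  have XYmax: "\<And>n a b. a \<in> D \<Longrightarrow> b \<in> D \<Longrightarrow> \<Phi> n a b \<le> \<Phi> n (X n) (Y n)"
    using P(2) unfolding X_def Y_def by (metis fst_conv snd_conv mem_Times_iff)
  obtain Bv where Bv: "\<And>y. y \<in> D \<Longrightarrow> \<bar>V y\<bar> \<le> Bv"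
  proof -
    have "bounded (V ` D)" using compact_continuous_image[OF Vc cD(1)] by (rule compact_imp_bounded)
    then obtain a where "\<forall>x\<in>V ` D. norm x \<le> a" unfolding bounded_iff by blast
    then show ?thesis using that by auto
  qed
  define A where "A n = real n *\<^sub>R (X n - Y n) - \<eta>" for n
  define E where "E n = V (X n) - V (Y n) + (V (xh - (1 / real n) *\<^sub>R \<eta>) - V xh)" for n
  define N0 where "N0 = nat (ceiling (norm \<eta> / r0)) + 1"
  have bD: "xh - (1 / real n) *\<^sub>R \<eta> \<in> D" if n: "n \<ge> N0" for n
  proof -
    have "norm \<eta> / r0 < real n" using n unfolding N0_def by linarith
    then have "norm \<eta> < real n * r0" using r0 by (simp add: field_simps)
    then have "norm \<eta> / real n \<le> r0" using r0 n N0_def by (simp add: field_simps)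
    then show ?thesis by (simp add: D_def dist_norm)
  qed
  have est: "(norm (A n))^2 + (norm (X n - xh))^2 \<le> E n" if n: "n \<ge> N0" for n
  proof -
    have n0: "real n \<noteq> 0" using n N0_def by auto
    have "\<Phi> n xh (xh - (1 / real n) *\<^sub>R \<eta>) \<le> \<Phi> n (X n) (Y n)" using XYmax[OF xhD bD[OF n]] .
    moreover have "\<Phi> n xh (xh - (1 / real n) *\<^sub>R \<eta>) = w xh - V (xh - (1 / real n) *\<^sub>R \<eta>)"
      using n0 by (simp add: \<Phi>_def)
    moreover have "w (X n) - V (X n) \<le> w xh - V xh" using lm[OF XD] .
    ultimately show ?thesis unfolding \<Phi>_def A_def E_def by linarith
  qed
  define C where "C = 4 * Bv + 1"
  have EB: "E n \<le> 4 * Bv" if "n \<ge> N0" for n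
    using Bv[OF XD[of n]] Bv[OF YD[of n]] Bv[OF bD[OF that]] Bv[OF xhD] unfolding E_def by linarith
  have AC: "norm (A n) \<le> C" if n: "n \<ge> N0" for n
  proof -
    have sq: "(norm (A n))^2 \<le> 4 * Bv" using est[OF n] EB[OF n] zero_le_power2[of "norm (X n - xh)"] by linarith
    show ?thesis
    proof (cases "norm (A n) \<le> 1")
      case True then show ?thesis using Bv[OF xhD] unfolding C_def by linarith
    next
      case False
      then have "norm (A n) \<le> norm (A n) * norm (A n)" by (simp add: mult_le_cancel_left1)
      then show ?thesis using sq unfolding C_def by (simp add: power2_eq_square)
    qed
  qed
  have dXY: "dist (X n) (Y n) \<le> (C + norm \<eta>) / real n" if n: "n \<ge> N0" for n
  proof -
    have n0: "real n > 0" using n N0_def by auto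
    have "real n *\<^sub>R (X n - Y n) = A n + \<eta>" by (simp add: A_def)
    then have "real n * norm (X n - Y n) = norm (A n + \<eta>)" using n0 by (metis norm_scaleR abs_of_pos)
    also have "\<dots> \<le> C + norm \<eta>" using AC[OF n] norm_triangle_ineq[of "A n" \<eta>] by linarith
    finally show ?thesis using n0 by (simp add: dist_norm field_simps)
  qed
  have evN0: "\<forall>\<^sub>F n in sequentially. n \<ge> N0" by (rule eventually_ge_at_top)
  have dXY0: "(\<lambda>n. dist (X n) (Y n)) \<longlonglongrightarrow> 0"
  proof (rule tendsto_sandwich[of "\<lambda>_. 0" _ _ "\<lambda>n. (C + norm \<eta>) / real n"])
    show "\<forall>\<^sub>F n in sequentially. 0 \<le> dist (X n) (Y n)" by simp
    show "\<forall>\<^sub>F n in sequentially. dist (X n) (Y n) \<le> (C + norm \<eta>) / real n"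
      using evN0 by eventually_elim (rule dXY)
  qed (auto intro: lim_const_over_n)
  have VV: "(\<lambda>n. V (X n) - V (Y n)) \<longlonglongrightarrow> 0"
  proof -
    have "uniformly_continuous_on D V" using compact_uniformly_continuous[OF Vc cD(1)] .
    then have "(\<lambda>n. dist (V (X n)) (V (Y n))) \<longlonglongrightarrow> 0"
      unfolding uniformly_continuous_on_sequentially using XD YD dXY0 by blast
    then show ?thesis by (simp add: dist_real_def tendsto_rabs_zero_iff)
  qed
  have Vb: "(\<lambda>n. V (xh - (1 / real n) *\<^sub>R \<eta>)) \<longlonglongrightarrow> V xh"
  proof -
    have "(\<lambda>n. xh - (1 / real n) *\<^sub>R \<eta>) \<longlonglongrightarrow> xh - 0 *\<^sub>R \<eta>"
      by (intro tendsto_intros lim_const_over_n)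
    then have t: "(\<lambda>n. xh - (1 / real n) *\<^sub>R \<eta>) \<longlonglongrightarrow> xh" by simp
    have "\<forall>\<^sub>F n in sequentially. xh - (1 / real n) *\<^sub>R \<eta> \<in> D"
      using evN0 by eventually_elim (rule bD)
    from continuous_on_tendsto_compose[OF Vc t xhD this] show ?thesis .
  qed
  have E0: "E \<longlonglongrightarrow> 0"
  proof -
    have "(\<lambda>n. (V (X n) - V (Y n)) + (V (xh - (1 / real n) *\<^sub>R \<eta>) - V xh)) \<longlonglongrightarrow> 0 + (V xh - V xh)"
      by (intro tendsto_intros VV Vb)
    then show ?thesis by (simp add: E_def[abs_def])
  qed
  have sq0: "(\<lambda>n. (norm (A n))^2) \<longlonglongrightarrow> 0"
  proof (rule tendsto_sandwich[of "\<lambda>_. 0" _ _ E])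
    show "\<forall>\<^sub>F n in sequentially. (norm (A n))^2 \<le> E n"
      using evN0
    proof eventually_elim
      case (elim n) then show ?case using est[of n] zero_le_power2[of "norm (X n - xh)"] by linarith
    qed
  qed (auto intro: E0)
  have A0: "A \<longlonglongrightarrow> 0"
  proof -
    have "(\<lambda>n. sqrt ((norm (A n))^2)) \<longlonglongrightarrow> sqrt 0" by (intro tendsto_intros sq0)
    then have "(\<lambda>n. norm (A n)) \<longlonglongrightarrow> 0" by simp
    then show ?thesis by (rule tendsto_norm_zero_iff[THEN iffD1])
  qed
  have sqX: "(\<lambda>n. (norm (X n - xh))^2) \<longlonglongrightarrow> 0"
  proof (rule tendsto_sandwich[of "\<lambda>_. 0" _ _ E])
    show "\<forall>\<^sub>F n in sequentially. (norm (X n - xh))^2 \<le> E n"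
      using evN0
    proof eventually_elim
      case (elim n) then show ?case using est[of n] zero_le_power2[of "norm (A n)"] by linarith
    qed
  qed (auto intro: E0)
  have nX0: "(\<lambda>n. norm (X n - xh)) \<longlonglongrightarrow> 0"
  proof -
    have "(\<lambda>n. sqrt ((norm (X n - xh))^2)) \<longlonglongrightarrow> sqrt 0" by (intro tendsto_intros sqX)
    then show ?thesis by simp
  qed
  have Xh: "X \<longlonglongrightarrow> xh"
  proof (rule LIM_zero_cancel)
    show "(\<lambda>n. X n - xh) \<longlonglongrightarrow> 0" using nX0 by (rule tendsto_norm_zero_iff[THEN iffD1])
  qed
  have XY0: "(\<lambda>n. X n - Y n) \<longlonglongrightarrow> 0"
    using dXY0 unfolding dist_norm by (rule tendsto_norm_zero_iff[THEN iffD1])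
  have Yh: "Y \<longlonglongrightarrow> xh"
  proof -
    have "(\<lambda>n. X n - (X n - Y n)) \<longlonglongrightarrow> xh - 0" by (intro tendsto_intros Xh XY0)
    then show ?thesis by simp
  qed

  obtain F where F0: "F \<ge> 0" and Fb: "\<And>y. y \<in> \<Omega> \<Longrightarrow> f y \<le> F" using f_bound[OF bdd] by blast
  have epd: "\<epsilon> ^ dd > 0" using ep by simp
  define \<delta>0 where "\<delta>0 = min (1/2) (\<epsilon> ^ dd / (4 * (F + 1)))"
  have \<delta>0a: "\<delta>0 > 0" using epd F0 by (auto simp: \<delta>0_def)
  have \<delta>0b: "\<delta>0 \<le> 1/2" unfolding \<delta>0_def by (rule min.cobounded1)
  note \<delta>0 = \<delta>0a \<delta>0b
  have \<delta>0F: "\<delta>0 * F \<le> \<epsilon> ^ dd / 4"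
  proof -
    have "\<delta>0 * F \<le> (\<epsilon> ^ dd / (4 * (F + 1))) * F" using F0 by (intro mult_right_mono) (auto simp: \<delta>0_def)
    also have "\<dots> = (\<epsilon> ^ dd / 4) * (F / (F + 1))" using F0 by (simp add: field_simps)
    also have "\<dots> \<le> (\<epsilon> ^ dd / 4) * 1" using F0 epd by (intro mult_left_mono) auto
    finally show ?thesis by simp
  qed
  define \<tau> where "\<tau> = \<delta>0 * \<epsilon> / (4 * real dd)"
  have \<tau>: "\<tau> > 0" using \<delta>0 ep dd1 by (simp add: \<tau>_def)
  have ev1: "\<forall>\<^sub>F n in sequentially. Y n \<in> \<Omega> \<or> X n \<notin> closure \<Omega>"
    using eta[OF Xh Yh] A0 unfolding A_def by blast
  have ev2: "\<forall>\<^sub>F n in sequentially. X n \<in> ball xh (r0/2)"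
    using Xh r0 by (intro topological_tendstoD) auto
  have ev3: "\<forall>\<^sub>F n in sequentially. Y n \<in> ball xh (r0/2)"
    using Yh r0 by (intro topological_tendstoD) auto
  have ev4: "\<forall>\<^sub>F n in sequentially. norm (X n - xh) < \<tau>"
    using order_tendstoD(2)[OF nX0 \<tau>] .
  have mlim: "(\<lambda>n. m (dist (X n) (Y n))) \<longlonglongrightarrow> m 0"
    by (rule continuous_on_tendsto_compose[OF m_cont dXY0]) auto
  have ev5: "\<forall>\<^sub>F n in sequentially. m (dist (X n) (Y n)) < \<epsilon> ^ dd / 4"
  proof -
    have "m 0 < \<epsilon> ^ dd / 4" using m0 epd by simp
    from order_tendstoD(2)[OF mlim this] show ?thesis .
  qed
  have "\<forall>\<^sub>F n in sequentially. n \<ge> N0 \<and> (Y n \<in> \<Omega> \<or> X n \<notin> closure \<Omega>) \<and> X n \<in> ball xh (r0/2)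
      \<and> Y n \<in> ball xh (r0/2) \<and> norm (X n - xh) < \<tau> \<and> m (dist (X n) (Y n)) < \<epsilon> ^ dd / 4"
    using evN0 ev1 ev2 ev3 ev4 ev5 by eventually_elim blast
  then obtain n where n: "n \<ge> N0" "Y n \<in> \<Omega> \<or> X n \<notin> closure \<Omega>" "X n \<in> ball xh (r0/2)"
    "Y n \<in> ball xh (r0/2)" "norm (X n - xh) < \<tau>" "m (dist (X n) (Y n)) < \<epsilon> ^ dd / 4"
    unfolding eventually_sequentially by blast
  have rn: "real n > 0" using n(1) N0_def by auto
  have XnB: "X n \<in> ball xh r0" "Y n \<in> ball xh r0" using n(3,4) r0 by auto
  define p where "p = (2 * real n) *\<^sub>R A n + 2 *\<^sub>R (X n - xh)"
  define q' where "q' = (2 * real n) *\<^sub>R A n - \<epsilon> *\<^sub>R one"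
  have pS: "p \<in> superdiff w (X n)"
  proof (rule superdiff_quad[where r="r0/2" and c="(real n)^2 + 1"])
    fix x' assume x': "x' \<in> ball (X n) (r0/2)"
    have x'D: "x' \<in> D" using x' n(3) dist_triangle[of xh x' "X n"] by (auto simp: D_def)
    have le: "\<Phi> n x' (Y n) \<le> \<Phi> n (X n) (Y n)" using XYmax[OF x'D YD] .
    have "real n *\<^sub>R (x' - Y n) - \<eta> = A n + real n *\<^sub>R (x' - X n)" by (simp add: A_def algebra_simps)
    then have e1: "(norm (real n *\<^sub>R (x' - Y n) - \<eta>))^2 = (norm (A n))^2 + 2 * real n * (A n \<bullet> (x' - X n)) + (real n)^2 * (norm (x' - X n))^2"
      using rn by (simp add: norm_sq_add power_mult_distrib)
    have "x' - xh = (X n - xh) + (x' - X n)" by simp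
    then have e2: "(norm (x' - xh))^2 = (norm (X n - xh))^2 + 2 * ((X n - xh) \<bullet> (x' - X n)) + (norm (x' - X n))^2"
      by (metis norm_sq_add)
    have e3: "p \<bullet> (x' - X n) = 2 * real n * (A n \<bullet> (x' - X n)) + 2 * ((X n - xh) \<bullet> (x' - X n))"
      by (simp add: p_def inner_add_left)
    have e4: "((real n)^2 + 1) * (norm (x' - X n))^2 = (real n)^2 * (norm (x' - X n))^2 + (norm (x' - X n))^2"
      by (simp add: algebra_simps)
    have e5: "\<Phi> n (X n) (Y n) = w (X n) - V (Y n) - (norm (A n))^2 - (norm (X n - xh))^2"
      by (simp add: \<Phi>_def A_def)
    show "w x' \<le> w (X n) + p \<bullet> (x' - X n) + ((real n)^2 + 1) * (norm (x' - X n))^2"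
      using le e1 e2 e3 e4 e5 unfolding \<Phi>_def by linarith
  qed (use r0 in auto)
  have qS: "q' \<in> subdiff v (Y n)"
  proof (rule subdiff_quad[where r="r0/2" and c="(real n)^2"])
    fix y' assume y': "y' \<in> ball (Y n) (r0/2)"
    have y'D: "y' \<in> D" using y' n(4) dist_triangle[of xh y' "Y n"] by (auto simp: D_def)
    have le: "\<Phi> n (X n) y' \<le> \<Phi> n (X n) (Y n)" using XYmax[OF XD y'D] .
    have "real n *\<^sub>R (X n - y') - \<eta> = A n + (- real n) *\<^sub>R (y' - Y n)" by (simp add: A_def algebra_simps)
    then have e1: "(norm (real n *\<^sub>R (X n - y') - \<eta>))^2 = (norm (A n))^2 - 2 * real n * (A n \<bullet> (y' - Y n)) + (real n)^2 * (norm (y' - Y n))^2"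
      using rn by (simp add: norm_sq_diff power_mult_distrib)
    have e3: "q' \<bullet> (y' - Y n) = 2 * real n * (A n \<bullet> (y' - Y n)) - \<epsilon> * (one \<bullet> (y' - Y n))"
      by (simp add: q'_def inner_diff_left)
    have e4: "one \<bullet> (y' - Y n) = one \<bullet> y' - one \<bullet> Y n" by (simp add: inner_diff_right)
    have e5: "\<Phi> n (X n) (Y n) = w (X n) - V (Y n) - (norm (A n))^2 - (norm (X n - xh))^2"
      by (simp add: \<Phi>_def A_def)
    have e6: "\<epsilon> * (one \<bullet> (y' - Y n)) = \<epsilon> * (one \<bullet> y') - \<epsilon> * (one \<bullet> Y n)" using e4 by (simp add: algebra_simps)
    show "v (Y n) + q' \<bullet> (y' - Y n) - (real n)^2 * (norm (y' - Y n))^2 \<le> v y'"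
      using le e1 e3 e5 e6 unfolding \<Phi>_def V_def by linarith
  qed (use r0 in auto)
  define q where "q = (2 * real n) *\<^sub>R A n"
  have q'nn: "\<And>i. 0 \<le> q' $ i" using qnn[OF XnB(2) qS] .
  have qi: "\<And>i. q $ i = q' $ i + \<epsilon>" by (simp add: q_def q'_def one_def)
  have pi: "\<And>i. p $ i = q $ i + 2 * (X n - xh) $ i" by (simp add: p_def q_def)
  define t where "t = 2 * norm (X n - xh)"
  have t0: "t \<ge> 0" by (simp add: t_def)
  have t2: "t < 2 * \<tau>" using n(5) by (simp add: t_def)
  have \<tau>1: "2 * \<tau> \<le> \<epsilon> / 4"
  proof -
    have "2 * \<tau> = \<delta>0 * \<epsilon> / (2 * real dd)" by (simp add: \<tau>_def)
    also have "\<dots> \<le> (1/2) * \<epsilon> / (2 * 1)" using \<delta>0 ep dd1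
      by (intro frac_le mult_right_mono) auto
    finally show ?thesis by simp
  qed
  define c where "c = 1 - t / \<epsilon>"
  have c0: "c \<ge> 0" using t2 \<tau>1 ep by (simp add: c_def field_simps)
  have c1: "c \<le> 1" using t0 ep by (simp add: c_def)
  have cq: "c * q $ i \<le> p $ i" for i
  proof -
    have "\<bar>(X n - xh) $ i\<bar> \<le> norm (X n - xh)" by (rule component_le_norm_cart)
    then have "p $ i \<ge> q $ i - t" using pi[of i] unfolding t_def by linarith
    moreover have "(t / \<epsilon>) * q $ i \<ge> (t / \<epsilon>) * \<epsilon>" using qi[of i] q'nn[of i] t0 ep
      by (intro mult_left_mono) auto
    moreover have "(t / \<epsilon>) * \<epsilon> = t" using ep by simp
    moreover have "c * q $ i = q $ i - (t / \<epsilon>) * q $ i" by (simp add: c_def algebra_simps)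
    ultimately show ?thesis by linarith
  qed
  have prod1: "c ^ dd * (\<Prod>i\<in>UNIV. q $ i) \<le> (\<Prod>i\<in>UNIV. p $ i)"
    using prod_ratio[of UNIV c "\<lambda>i. q $ i" "\<lambda>i. p $ i"] cq qi q'nn ep c0
    unfolding dd_def by (smt (verit) finite_class.finite_UNIV)
  have prod2: "(\<Prod>i\<in>UNIV. q' $ i) + \<epsilon> ^ dd \<le> (\<Prod>i\<in>UNIV. q $ i)"
    using prod_shift[of UNIV "\<lambda>i. q' $ i" \<epsilon>] q'nn ep qi unfolding dd_def by simp
  define s where "s = c ^ dd"
  have s1: "s \<ge> 1 - \<delta>0"
  proof -
    have "1 + real dd * (- (t / \<epsilon>)) \<le> (1 + - (t / \<epsilon>)) ^ dd"
      using c0 by (intro Bernoulli_inequality) (simp add: c_def)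
    moreover have "real dd * (t / \<epsilon>) \<le> \<delta>0"
    proof -
      have "t / \<epsilon> \<le> 2 * \<tau> / \<epsilon>" using t2 ep by (intro divide_right_mono) auto
      also have "2 * \<tau> / \<epsilon> = \<delta>0 / (2 * real dd)" using ep by (simp add: \<tau>_def field_simps)
      finally have "real dd * (t / \<epsilon>) \<le> real dd * (\<delta>0 / (2 * real dd))" using dd1 by (intro mult_left_mono) auto
      also have "\<dots> = \<delta>0 / 2" using dd1 by (simp add: field_simps)
      finally have "real dd * (t / \<epsilon>) \<le> \<delta>0 / 2" .
      then show ?thesis using \<delta>0 by linarith
    qed
    ultimately show ?thesis by (simp add: s_def c_def)
  qed
  have s0: "s > 0" using s1 \<delta>0 by simp
  have sp: "s * ((\<Prod>i\<in>UNIV. q' $ i) + \<epsilon> ^ dd) \<le> (\<Prod>i\<in>UNIV. p $ i)"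
  proof -
    have "s * ((\<Prod>i\<in>UNIV. q' $ i) + \<epsilon> ^ dd) \<le> s * (\<Prod>i\<in>UNIV. q $ i)"
      using prod2 s0 by (intro mult_left_mono) auto
    then show ?thesis using prod1 by (simp add: s_def)
  qed
  have subI: "ereal (\<Prod>i\<in>UNIV. p $ i) \<le> usc_env pos_orthant (hat_rhs f z) (X n)"
    using sub[OF XnB(1) pS] .
  have supI: "lsc_env pos_orthant f (Y n) \<le> ereal (\<Prod>i\<in>UNIV. q' $ i)"
    using super[OF XnB(2) qS] .
  show False
  proof (cases "Y n \<in> \<Omega>")
    case False
    then have "X n \<notin> closure \<Omega>" using n(2) by blast
    then have "ereal (\<Prod>i\<in>UNIV. p $ i) \<le> 0" using subI hat_out[of "X n" z] by (rule_tac order_trans) auto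
    then have pl: "(\<Prod>i\<in>UNIV. p $ i) \<le> 0" by (simp add: zero_ereal_def)
    have "(\<Prod>i\<in>UNIV. q' $ i) \<ge> 0" using q'nn by (intro prod_nonneg) auto
    then have "s * ((\<Prod>i\<in>UNIV. q' $ i) + \<epsilon> ^ dd) > 0" using s0 epd by (intro mult_pos_pos) auto
    then show False using sp pl by linarith
  next
    case True
    have pl: "(\<Prod>i\<in>UNIV. p $ i) \<le> f (Y n) + m (dist (X n) (Y n))"
      using order_trans[OF subI hat_le[OF True, of z "X n"]] by simp
    have ql: "f (Y n) \<le> (\<Prod>i\<in>UNIV. q' $ i)"
      using order_trans[OF lsc_ge[OF True] supI] by simp
    have fy0: "0 \<le> f (Y n)" using True \<Omega>_sub f_nonneg by auto
    have a1: "s * ((\<Prod>i\<in>UNIV. q' $ i) + \<epsilon> ^ dd) \<ge> s * (f (Y n) + \<epsilon> ^ dd)"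
      using ql s0 by (intro mult_left_mono) auto
    have a2: "s * f (Y n) \<ge> (1 - \<delta>0) * f (Y n)" using s1 fy0 by (intro mult_right_mono) auto
    have a3: "s * \<epsilon> ^ dd \<ge> (1/2) * \<epsilon> ^ dd" using s1 \<delta>0 epd by (intro mult_right_mono) auto
    have a4: "\<delta>0 * f (Y n) \<le> \<delta>0 * F" using Fb[OF True] \<delta>0 by (intro mult_left_mono) auto
    have a5: "s * (f (Y n) + \<epsilon> ^ dd) = s * f (Y n) + s * \<epsilon> ^ dd" by (simp add: algebra_simps)
    have a6: "(1 - \<delta>0) * f (Y n) = f (Y n) - \<delta>0 * f (Y n)" by (simp add: algebra_simps)
    show False using sp pl a1 a2 a3 a4 a5 a6 \<delta>0F n(6) by linarith
  qed
qed
end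


lemma open_pos: "open (pos_orthant :: (real ^ 'n) set)"
proof -
  have "pos_orthant = (\<Inter>i. {x::real^'n. x $ i > 0})" by (auto simp: pos_orthant_def)
  moreover have "open (\<Inter>i. {x::real^'n. x $ i > 0})"
    by (intro open_INT) (auto intro: open_halfspace_component_gt_cart)
  ultimately show ?thesis by simp
qed

theorem theorem2p10:
  fixes \<Omega> :: "(real ^ 'n) set"
    and f u v :: "real ^ 'n \<Rightarrow> real"
    and m :: "real \<Rightarrow> real"
  assumes dim: "CARD('n) \<ge> 2"
    and \<Omega>_sub: "\<Omega> \<subseteq> pos_orthant" and \<Omega>_open: "open \<Omega>" and \<Omega>_bdd: "bounded \<Omega>"
    and cone: "cone_condition \<Omega>"
    and f_nonneg: "\<forall>x\<in>pos_orthant. 0 \<le> f x"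
    and m_cont: "continuous_on {0..} m" and m_mono: "mono_on {0..} m"
    and m_nonneg: "\<forall>t\<ge>0. 0 \<le> m t" and m0: "m 0 = 0"
    and f_mod: "\<forall>x\<in>\<Omega>. \<forall>y\<in>\<Omega>. \<bar>f x - f y\<bar> \<le> m (dist x y)"
    and f_out: "\<forall>x\<in>pos_orthant - \<Omega>. f x = 0"
    and u_cont: "continuous_on cl_orthant u" and v_cont: "continuous_on cl_orthant v"
    and u_sub: "visc_sub u f" and v_super: "visc_super v f"
    and u_trunc: "truncatable u f"
    and v_mono: "pareto_monotone cl_orthant v"
    and bdry: "\<forall>x\<in>cl_orthant - pos_orthant. u x \<le> v x"
  shows "\<forall>x\<in>pos_orthant. u x \<le> v x"
proof (rule ccontr)
  assume "\<not> (\<forall>x\<in>pos_orthant. u x \<le> v x)"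
  then obtain x0 where x0: "x0 \<in> pos_orthant" "v x0 < u x0" by auto
  interpret fsetup \<Omega> f m
    using \<Omega>_sub \<Omega>_open f_nonneg m_cont m_mono m_nonneg m0 f_mod f_out by unfold_locales
  define one :: "real ^ 'n" where "one = (\<chi> i. 1)"
  define z where "z = x0"
  define tr where "tr x = (\<chi> i. min (x $ i) (z $ i))" for x :: "real ^ 'n"
  define w where "w = trunc u z"
  have w_eq: "w x = u (tr x)" for x by (simp add: w_def trunc_def tr_def)
  have z0: "\<And>i. z $ i > 0" using x0 by (simp add: z_def pos_orthant_def)
  have trc: "continuous_on UNIV tr" unfolding tr_def by (intro continuous_intros)
  have tr_cl: "tr x \<in> cl_orthant" if "x \<in> cl_orthant" for x
    using that z0 by (auto simp: tr_def cl_orthant_def less_imp_le)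
  have wc: "continuous_on cl_orthant w"
    unfolding w_eq[abs_def] by (rule continuous_on_compose2[OF u_cont continuous_on_subset[OF trc]]) (use tr_cl in auto)
  have one_inner: "one \<bullet> x = (\<Sum>i\<in>UNIV. x $ i)" for x by (simp add: one_def inner_vec_def)
  have one_nn: "one \<bullet> x \<ge> 0" if "x \<in> cl_orthant" for x
    using that by (simp add: one_inner cl_orthant_def sum_nonneg)
  have x0cl: "x0 \<in> cl_orthant" using x0 by (auto simp: pos_orthant_def cl_orthant_def less_imp_le)
  define \<epsilon> where "\<epsilon> = (u x0 - v x0) / (2 * (one \<bullet> x0 + 1))"
  have ep: "\<epsilon> > 0" using x0 one_nn[OF x0cl] by (simp add: \<epsilon>_def)
  have epx0: "\<epsilon> * (one \<bullet> x0) < u x0 - v x0"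
  proof -
    have "\<epsilon> * (one \<bullet> x0) \<le> \<epsilon> * (one \<bullet> x0 + 1)" using ep by simp
    also have "\<dots> = (u x0 - v x0) / 2" using one_nn[OF x0cl] by (simp add: \<epsilon>_def field_simps)
    finally have "\<epsilon> * (one \<bullet> x0) \<le> (u x0 - v x0) / 2" .
    moreover have "(u x0 - v x0) / 2 < u x0 - v x0" using x0(2) by simp
    ultimately show ?thesis by (rule le_less_trans)
  qed
  define G where "G x = w x - (v x + \<epsilon> * (one \<bullet> x))" for x
  define Bx where "Bx = cbox (0::real^'n) z"
  have Bx_cl: "Bx \<subseteq> cl_orthant" by (auto simp: Bx_def mem_box_cart cl_orthant_def)
  have Gc: "continuous_on Bx G" unfolding G_def
    by (intro continuous_intros continuous_on_subset[OF wc Bx_cl] continuous_on_subset[OF v_cont Bx_cl])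
  have "\<exists>xh\<in>Bx. \<forall>y\<in>Bx. G y \<le> G xh"
  proof (rule continuous_attains_sup[OF _ _ Gc])
    show "compact Bx" by (simp add: Bx_def)
    have "0 \<in> Bx" using z0 by (auto simp: Bx_def mem_box_cart less_imp_le)
    then show "Bx \<noteq> {}" by blast
  qed
  then obtain xh where xhB: "xh \<in> Bx" and xhmax: "\<And>y. y \<in> Bx \<Longrightarrow> G y \<le> G xh" by blast
  have trB: "tr x \<in> Bx" if "x \<in> cl_orthant" for x
    using that z0 by (auto simp: tr_def Bx_def mem_box_cart cl_orthant_def less_imp_le)
  have trtr: "tr (tr x) = tr x" for x by (simp add: tr_def)
  have reduce: "G x \<le> G (tr x)" if x: "x \<in> cl_orthant" for x
  proof -
    have "v (tr x) \<le> v x" using v_mono tr_cl[OF x] x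
      by (auto simp: pareto_monotone_def vle_def tr_def)
    moreover have "one \<bullet> tr x \<le> one \<bullet> x" unfolding one_inner
      by (intro sum_mono) (simp add: tr_def)
    moreover have "w (tr x) = w x" by (simp add: w_eq trtr)
    ultimately show ?thesis unfolding G_def using ep by (smt (verit) mult_left_mono)
  qed
  have global: "G x \<le> G xh" if "x \<in> cl_orthant" for x
    using reduce[OF that] xhmax[OF trB[OF that]] by linarith
  have trx0: "tr x0 = x0" using x0 by (simp add: tr_def z_def vec_eq_iff)
  have Gx0: "G x0 > 0" using epx0 by (simp add: G_def w_eq trx0)
  have xhcl: "xh \<in> cl_orthant" using xhB Bx_cl by blast
  have trxh: "tr xh = xh" using xhB by (auto simp: tr_def Bx_def mem_box_cart vec_eq_iff min_absorb1)
  have xhpos: "xh \<in> pos_orthant"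
  proof (rule ccontr)
    assume "xh \<notin> pos_orthant"
    then have "u xh \<le> v xh" using bdry xhcl by blast
    moreover have "\<epsilon> * (one \<bullet> xh) \<ge> 0" using one_nn[OF xhcl] ep by simp
    ultimately have "G xh \<le> 0" by (simp add: G_def w_eq trxh)
    then show False using global[OF x0cl] Gx0 by linarith
  qed
  obtain r0 where r0: "r0 > 0" "cball xh r0 \<subseteq> pos_orthant"
    using open_pos xhpos open_contains_cball by blast
  have pos_cl: "pos_orthant \<subseteq> cl_orthant" by (auto simp: pos_orthant_def cl_orthant_def less_imp_le)
  have zpos: "z \<in> pos_orthant" using x0 by (simp add: z_def)
  show False
  proof (rule core[OF \<Omega>_bdd cone r0(1), where w=w and v=v and \<epsilon>=\<epsilon> and z=z and xh=xh])
    have cs: "cball xh r0 \<subseteq> cl_orthant" using r0(2) pos_cl by blast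
    show "continuous_on (cball xh r0) w" using wc cs by (rule continuous_on_subset)
    show "continuous_on (cball xh r0) v" using v_cont cs by (rule continuous_on_subset)
    show "0 < \<epsilon>" by (rule ep)
    fix x assume "x \<in> cball xh r0"
    then have "x \<in> cl_orthant" using r0(2) pos_cl by blast
    then show "w x - (v x + \<epsilon> * ((\<chi> i. 1) \<bullet> x)) \<le> w xh - (v xh + \<epsilon> * ((\<chi> i. 1) \<bullet> xh))"
      using global by (simp add: G_def one_def)
  next
    fix x p assume x: "x \<in> ball xh r0" and p: "p \<in> superdiff w x"
    have "x \<in> pos_orthant" using x r0(2) by auto
    moreover have "visc_sub (trunc u z) (hat_rhs f z)" using u_trunc zpos by (simp add: truncatable_def)
    ultimately show "ereal (\<Prod>i\<in>UNIV. p $ i) \<le> usc_env pos_orthant (hat_rhs f z) x"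
      using p by (auto simp: visc_sub_def w_def)
  next
    fix y q assume y: "y \<in> ball xh r0" and q: "q \<in> subdiff v y"
    have "y \<in> pos_orthant" using y r0(2) by auto
    then show "lsc_env pos_orthant f y \<le> ereal (\<Prod>i\<in>UNIV. q $ i)"
      using v_super q by (auto simp: visc_super_def)
  next
    fix y q i assume y: "y \<in> ball xh r0" and q: "q \<in> subdiff v y"
    have "y \<in> pos_orthant" using y r0(2) by auto
    then show "0 \<le> q $ i" using subdiff_mono_nonneg[OF v_mono _ q] by blast
  qed
qed


end
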